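(* Let $\mathbb{F}\in\{\mathbb{R},\mathbb{C}\}$, let $\nu$ be a vector norm on $\mathbb{F}^n$, and let $A\in\mathbb{F}^{n\times n}$ be paracontracting with respect to $\nu$. Let $K=\{x\in\mathbb{F}^n: Ax=x\}$ be the subspace of fixed points of $A$ and let $H=\mathcal{R}(I-A)$ be the range of $I-A$. Then $H$ is invariant under $A$, $H$ is complementary to $K$ (i.e. $\mathbb{F}^n=H\oplus K$), and $\nu^0_H(A)<1$; consequently $A$ is an $H$-contractor with respect to $\nu$.
   Context: $A$ is paracontracting with respect to $\nu$ if $\nu(Ax)<\nu(x)$ whenever $Ax\neq x$. For a subspace $H$ invariant under $A$, the partial norm is $\nu^0_H(A)=\sup_{0\neq x\in H}\nu(Ax)/\nu(x)$. The operator norm is $\nu^0(A)=\sup_{x\neq 0}\nu(Ax)/\nu(x)$. $A$ is nonexpansive with respect to $\nu$ if $\nu^0(A)\le 1$. $A$ is an $H$-contractor (with respect to $\nu$) if $A$ is nonexpansive, $H$ is invariant under $A$, and $\nu^0_H(A)<1$. *)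

theory Defs
  imports "HOL-Analysis.Analysis"
begin

text \<open>Vectors in F^n are modelled as 'a ^ 'n, matrices as 'a ^ 'n ^ 'n, where the
scalar field 'a will be instantiated to real and to complex.\<close>

definition is_vector_norm :: "('a::real_normed_field ^ 'n \<Rightarrow> real) \<Rightarrow> bool" where
  "is_vector_norm \<nu> \<longleftrightarrow>
     (\<forall>x. 0 \<le> \<nu> x) \<and> (\<forall>x. \<nu> x = 0 \<longleftrightarrow> x = 0) \<and>
     (\<forall>c x. \<nu> (c *s x) = norm c * \<nu> x) \<and>
     (\<forall>x y. \<nu> (x + y) \<le> \<nu> x + \<nu> y)"

definition paracontracting :: "('a::real_normed_field ^ 'n \<Rightarrow> real) \<Rightarrow> 'a ^ 'n ^ 'n \<Rightarrow> bool" where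
  "paracontracting \<nu> A \<longleftrightarrow> (\<forall>x. A *v x \<noteq> x \<longrightarrow> \<nu> (A *v x) < \<nu> x)"

definition invariant_under :: "('a::real_normed_field ^ 'n) set \<Rightarrow> 'a ^ 'n ^ 'n \<Rightarrow> bool" where
  "invariant_under H A \<longleftrightarrow> (\<forall>x\<in>H. A *v x \<in> H)"

definition partial_norm :: "('a::real_normed_field ^ 'n \<Rightarrow> real) \<Rightarrow> ('a ^ 'n) set \<Rightarrow> 'a ^ 'n ^ 'n \<Rightarrow> real" where
  "partial_norm \<nu> H A =
     (if H - {0} = {} then 0 else (SUP x \<in> H - {0}. \<nu> (A *v x) / \<nu> x))"

definition operator_norm :: "('a::real_normed_field ^ 'n \<Rightarrow> real) \<Rightarrow> 'a ^ 'n ^ 'n \<Rightarrow> real" where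
  "operator_norm \<nu> A = (SUP x \<in> UNIV - {0}. \<nu> (A *v x) / \<nu> x)"

definition nonexpansive :: "('a::real_normed_field ^ 'n \<Rightarrow> real) \<Rightarrow> 'a ^ 'n ^ 'n \<Rightarrow> bool" where
  "nonexpansive \<nu> A \<longleftrightarrow> operator_norm \<nu> A \<le> 1"

definition H_contractor :: "('a::real_normed_field ^ 'n \<Rightarrow> real) \<Rightarrow> ('a ^ 'n) set \<Rightarrow> 'a ^ 'n ^ 'n \<Rightarrow> bool" where
  "H_contractor \<nu> H A \<longleftrightarrow> nonexpansive \<nu> A \<and> invariant_under H A \<and> partial_norm \<nu> H A < 1"

definition complementary :: "('a::real_normed_field ^ 'n) set \<Rightarrow> ('a ^ 'n) set \<Rightarrow> bool" where
  "complementary H K \<longleftrightarrow> H \<inter> K = {0} \<and> {h + k | h k. h \<in> H \<and> k \<in> K} = UNIV"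

definition lemma2p5_claim :: "('a::real_normed_field ^ 'n \<Rightarrow> real) \<Rightarrow> 'a ^ 'n ^ 'n \<Rightarrow> bool" where
  "lemma2p5_claim \<nu> A \<longleftrightarrow>
     (let K = {x. A *v x = x}; H = range (\<lambda>x. x - A *v x) in
        invariant_under H A \<and> complementary H K \<and> partial_norm \<nu> H A < 1 \<and> H_contractor \<nu> H A)"

end

theory Submission
  imports Defs
begin

lemma mv_scaleR: fixes A :: "'a::real_normed_field^'n^'m"
  shows "A *v (c *\<^sub>R x) = c *\<^sub>R (A *v x)"
  by (simp add: vec_eq_iff matrix_vector_mult_def scaleR_sum_right mult_scaleR_right)

lemma vec_scaleR_eq: fixes x :: "'a::real_normed_field^'n"
  shows "c *\<^sub>R x = (of_real c :: 'a) *s x"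
  by (simp add: vec_eq_iff of_real_def)

lemma main:
  fixes \<nu> :: "'a::{real_normed_field,euclidean_space}^'n \<Rightarrow> real" and A :: "'a^'n^'n"
  assumes nv: "is_vector_norm \<nu>" and pc: "paracontracting \<nu> A"
  shows "lemma2p5_claim \<nu> A"
proof -
  have nn: "\<And>x. 0 \<le> \<nu> x" and z: "\<And>x. \<nu> x = 0 \<longleftrightarrow> x = 0"
    and hom: "\<And>c x. \<nu> (c *s x) = norm c * \<nu> x" and tri: "\<And>x y. \<nu> (x + y) \<le> \<nu> x + \<nu> y"
    using nv unfolding is_vector_norm_def by auto
  have homR: "\<nu> (c *\<^sub>R x) = \<bar>c\<bar> * \<nu> x" for c x
    by (simp add: vec_scaleR_eq hom)
  have neg: "\<nu> (- x) = \<nu> x" for x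
    using homR[of "-1" x] by simp
  have trid: "\<nu> x - \<nu> y \<le> \<nu> (x - y)" for x y
    using tri[of "x - y" y] by simp
  have ne: "\<nu> (A *v x) \<le> \<nu> x" for x
    using pc unfolding paracontracting_def by (cases "A *v x = x") force+
  define K where "K = {x. A *v x = x}"
  define f where "f = (\<lambda>x. x - A *v x)"
  define H where "H = range f"
  have lin: "linear f"
    by (rule linearI) (auto simp: f_def matrix_vector_right_distrib mv_scaleR algebra_simps)
  have subH: "subspace H" unfolding H_def by (rule linear_subspace_image[OF lin subspace_UNIV])
  have K_eq: "K = {x. f x = 0}" by (auto simp: K_def f_def)
  have subK: "subspace K" unfolding K_eq by (rule linear_subspace_kernel[OF lin])
  have inv: "invariant_under H A"
    unfolding invariant_under_def H_def f_def
    by (auto simp: matrix_vector_mult_diff_distrib)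
  have HK: "H \<inter> K = {0}"
  proof
    show "{0} \<subseteq> H \<inter> K" using subH subK by (auto simp: subspace_0)
    show "H \<inter> K \<subseteq> {0}"
    proof
      fix y assume "y \<in> H \<inter> K"
      then obtain x where y: "y = x - A *v x" and Ay: "A *v y = y"
        by (auto simp: H_def K_def f_def)
      have Ax: "A *v x = x - y" using y by simp
      have step: "A *v (x - of_nat k *\<^sub>R y) = x - of_nat (Suc k) *\<^sub>R y" for k
        by (simp add: matrix_vector_mult_diff_distrib mv_scaleR Ay Ax algebra_simps)
      have bnd: "\<nu> (x - of_nat k *\<^sub>R y) \<le> \<nu> x" for k
      proof (induction k)
        case 0 then show ?case by simp
      next
        case (Suc k) then show ?case using ne[of "x - of_nat k *\<^sub>R y"] step[of k] by simp
      qed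
      have kb: "real k * \<nu> y \<le> 2 * \<nu> x" for k
      proof -
        have "real k * \<nu> y = \<nu> (x - (x - of_nat k *\<^sub>R y))" by (simp add: homR)
        also have "\<dots> \<le> \<nu> x + \<nu> (- (x - of_nat k *\<^sub>R y))"
          using tri[of x "- (x - of_nat k *\<^sub>R y)"] by simp
        also have "\<dots> = \<nu> x + \<nu> (x - of_nat k *\<^sub>R y)" by (simp only: neg)
        finally show ?thesis using bnd[of k] by simp
      qed
      have "\<nu> y = 0"
      proof (rule ccontr)
        assume "\<nu> y \<noteq> 0"
        then have p: "\<nu> y > 0" using nn[of y] by simp
        obtain k where "real k > 2 * \<nu> x / \<nu> y" using reals_Archimedean2 by blast
        then have "real k * \<nu> y > 2 * \<nu> x" using p by (simp add: field_simps)
        then show False using kb[of k] by simp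
      qed
      then show "y \<in> {0}" using z by simp
    qed
  qed
  have fH: "f ` H = H"
  proof (rule subspace_dim_equal)
    show "subspace (f ` H)" by (rule linear_subspace_image[OF lin subH])
    show "subspace H" by (rule subH)
    show "f ` H \<subseteq> H" by (auto simp: H_def)
    have spH: "span H = H" using subH by (simp add: span_eq_iff)
    have "inj_on f (span H)" unfolding spH
    proof (rule inj_onI)
      fix a b assume "a \<in> H" "b \<in> H" "f a = f b"
      then have "a - b \<in> H" "f (a - b) = 0" using subH
        by (auto simp: linear_diff[OF lin] subspace_diff)
      then have "a - b \<in> H \<inter> K" using K_eq by auto
      then show "a = b" using HK by auto
    qed
    then show "dim H \<le> dim (f ` H)" using dim_image_eq[OF lin] by simp
  qed
  have comp: "complementary H K"
    unfolding complementary_def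
  proof (intro conjI HK)
    show "{h + k |h k. h \<in> H \<and> k \<in> K} = UNIV"
    proof (intro set_eqI iffI)
      fix x :: "'a^'n"
      have "f x \<in> f ` H" using fH by (auto simp: H_def)
      then obtain h where h: "h \<in> H" "f x = f h" by auto
      then have "x - h \<in> K" using K_eq by (simp add: linear_diff[OF lin])
      then show "x \<in> {h + k |h k. h \<in> H \<and> k \<in> K}" using h(1)
        by (intro CollectI exI[of _ h] exI[of _ "x - h"]) auto
    qed auto
  qed
  have nu0: "\<nu> 0 = 0" using z by simp
  define C where "C = (\<Sum>i\<in>UNIV. \<nu> (axis i 1))"
  have C0: "C \<ge> 0" unfolding C_def by (rule sum_nonneg) (simp add: nn)
  have sumtri: "\<nu> (sum g S) \<le> (\<Sum>i\<in>S. \<nu> (g i))" for g :: "'n \<Rightarrow> 'a^'n" and S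
  proof (induction S rule: infinite_finite_induct)
    case (insert i F)
    then show ?case using tri[of "g i" "sum g F"] by simp
  qed (simp_all add: nu0)
  have nub: "\<nu> x \<le> C * norm x" for x
  proof -
    have "x = (\<Sum>i\<in>UNIV. x $ i *s axis i 1)"
      by (simp add: vec_eq_iff axis_def if_distrib[of "\<lambda>t. _ * t"] eq_commute cong: if_cong)
    then have "\<nu> x = \<nu> (\<Sum>i\<in>UNIV. x $ i *s axis i 1)" by simp
    also have "\<dots> \<le> (\<Sum>i\<in>UNIV. \<nu> (x $ i *s axis i 1))" by (rule sumtri)
    also have "\<dots> = (\<Sum>i\<in>UNIV. norm (x $ i) * \<nu> (axis i 1))" by (simp add: hom)
    also have "\<dots> \<le> (\<Sum>i\<in>UNIV. norm x * \<nu> (axis i 1))"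
    proof (rule sum_mono, rule mult_right_mono)
      fix i show "norm (x $ i) \<le> norm x" unfolding norm_vec_def by (rule member_le_L2_set) simp_all
    qed (simp add: nn)
    also have "\<dots> = C * norm x" by (simp add: C_def sum_distrib_left mult.commute)
    finally show ?thesis .
  qed
  have lip_cont: "continuous_on T g" if L: "\<And>x y. \<bar>g x - g y\<bar> \<le> C * dist x y" for g :: "'a^'n \<Rightarrow> real" and T
    unfolding continuous_on_iff
  proof (intro ballI allI impI)
    fix x e assume "(e::real) > 0"
    show "\<exists>d>0. \<forall>x'\<in>T. dist x' x < d \<longrightarrow> dist (g x') (g x) < e"
    proof (intro exI[of _ "e / (C + 1)"] conjI ballI impI)
      show "e / (C + 1) > 0" using \<open>e > 0\<close> C0 by simp
      fix x' assume "dist x' x < e / (C + 1)"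
      then have "(C + 1) * dist x' x < e" using C0 by (simp add: field_simps)
      moreover have "dist (g x') (g x) \<le> C * dist x' x" using L[of x' x] by (simp add: dist_real_def)
      moreover have "C * dist x' x \<le> (C + 1) * dist x' x" by (simp add: distrib_right)
      ultimately show "dist (g x') (g x) < e" by linarith
    qed
  qed
  have lipnu: "\<bar>\<nu> x - \<nu> y\<bar> \<le> C * dist x y" for x y
  proof -
    have "\<nu> x - \<nu> y \<le> \<nu> (x - y)" "\<nu> y - \<nu> x \<le> \<nu> (y - x)" using trid by auto
    moreover have "\<nu> (y - x) = \<nu> (x - y)" using neg[of "x - y"] by simp
    moreover have "\<nu> (x - y) \<le> C * dist x y" using nub[of "x - y"] by (simp add: dist_norm)
    ultimately show ?thesis by linarith
  qed
  have lipA: "\<bar>\<nu> (A *v x) - \<nu> (A *v y)\<bar> \<le> C * dist x y" for x y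
  proof -
    have "\<nu> (A *v x) - \<nu> (A *v y) \<le> \<nu> (x - y)" "\<nu> (A *v y) - \<nu> (A *v x) \<le> \<nu> (y - x)"
      using trid[of "A *v x" "A *v y"] trid[of "A *v y" "A *v x"] ne[of "x - y"] ne[of "y - x"]
      by (auto simp: matrix_vector_mult_diff_distrib)
    moreover have "\<nu> (y - x) = \<nu> (x - y)" using neg[of "x - y"] by simp
    moreover have "\<nu> (x - y) \<le> C * dist x y" using nub[of "x - y"] by (simp add: dist_norm)
    ultimately show ?thesis by linarith
  qed
  have pn: "partial_norm \<nu> H A < 1"
  proof (cases "H - {0} = {}")
    case True then show ?thesis by (simp add: partial_norm_def)
  next
    case False
    define g where "g x = \<nu> (A *v x) / \<nu> x" for x
    define S where "S = H \<inter> sphere 0 1"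
    have cS: "compact S" unfolding S_def
      by (rule closed_Int_compact[OF closed_subspace[OF subH] compact_sphere])
    obtain h where h: "h \<in> H" "h \<noteq> 0" using False by auto
    have scl: "x /\<^sub>R norm x \<in> S" if "x \<in> H" "x \<noteq> 0" for x
      using that subH by (simp add: S_def subspace_scale)
    have neS: "S \<noteq> {}" using scl[OF h] by auto
    have gc: "continuous_on S g" unfolding g_def
    proof (rule continuous_on_divide)
      show "continuous_on S (\<lambda>x. \<nu> (A *v x))" by (rule lip_cont[OF lipA])
      show "continuous_on S \<nu>" by (rule lip_cont[OF lipnu])
      show "\<forall>x\<in>S. \<nu> x \<noteq> 0"
      proof
        fix x assume "x \<in> S"
        then have "x \<noteq> 0" by (auto simp: S_def)
        then show "\<nu> x \<noteq> 0" by (simp only: z simp_thms)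
      qed
    qed
    obtain x0 where x0: "x0 \<in> S" "\<And>y. y \<in> S \<Longrightarrow> g y \<le> g x0"
      using continuous_attains_sup[OF cS neS gc] by blast
    have x0H: "x0 \<in> H" "x0 \<noteq> 0" using x0(1) by (auto simp: S_def)
    have "A *v x0 \<noteq> x0"
    proof
      assume "A *v x0 = x0"
      then have "x0 \<in> H \<inter> K" using x0H by (simp add: K_def)
      then show False using HK x0H by auto
    qed
    then have "\<nu> (A *v x0) < \<nu> x0" using pc unfolding paracontracting_def by blast
    moreover have "\<nu> x0 > 0" using nn[of x0] z[of x0] x0H by simp
    ultimately have g1: "g x0 < 1" by (simp add: g_def)
    have gsc: "g x = g (x /\<^sub>R norm x)" if "x \<noteq> 0" for x
      using that by (simp add: g_def homR mv_scaleR)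
    have "(SUP x \<in> H - {0}. \<nu> (A *v x) / \<nu> x) \<le> g x0"
    proof (rule cSUP_least)
      show "H - {0} \<noteq> {}" by (rule False)
      fix x assume "x \<in> H - {0}"
      then show "\<nu> (A *v x) / \<nu> x \<le> g x0"
        using gsc[of x] x0(2)[OF scl[of x]] by (simp add: g_def)
    qed
    then show ?thesis using g1 False by (simp add: partial_norm_def)
  qed
  have nexp: "nonexpansive \<nu> A"
    unfolding nonexpansive_def operator_norm_def
  proof (rule cSUP_least)
    have "axis undefined (1::'a) \<noteq> 0" by (simp add: axis_eq_0_iff)
    then show "UNIV - {0::'a^'n} \<noteq> {}" by blast
    fix x :: "'a^'n" assume "x \<in> UNIV - {0}"
    then have "\<nu> x > 0" using nn[of x] z[of x] by simp
    then show "\<nu> (A *v x) / \<nu> x \<le> 1" using ne[of x] by simp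
  qed
  have HH: "H = range (\<lambda>x. x - A *v x)" by (simp add: H_def f_def)
  show ?thesis
    unfolding lemma2p5_claim_def Let_def H_contractor_def
    using inv comp pn nexp unfolding HH K_def by simp
qed

theorem lemma2p5:
  shows "(\<forall>(\<nu> :: real ^ 'n \<Rightarrow> real) (A :: real ^ 'n ^ 'n).
            is_vector_norm \<nu> \<and> paracontracting \<nu> A \<longrightarrow> lemma2p5_claim \<nu> A)
       \<and> (\<forall>(\<nu> :: complex ^ 'n \<Rightarrow> real) (A :: complex ^ 'n ^ 'n).
            is_vector_norm \<nu> \<and> paracontracting \<nu> A \<longrightarrow> lemma2p5_claim \<nu> A)"
  using main[where 'a=real and 'n='n] main[where 'a=complex and 'n='n] by blast

end
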